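(* Assume $k\ge 2$. Let $A:V\to V$ be an isomorphism of the model $\mathcal V$, i.e. a linear bijection with $(Ax,Ay)=(x,y)$ and $R(Ax,Ay,Az,Aw)=R(x,y,z,w)$ for all $x,y,z,w\in V$. Then there exist a permutation $\sigma$ of $\{1,\dots,k\}$ and real constants $a_0$ and $b_1,\dots,b_k$ with $|a_0|\,b_i^2=1$ for all $i$, such that for $1\le i\le k$: $AU_0=a_0U_0+\Xi_0$ with $\Xi_0\in A_V$; $AU_i=b_iU_{\sigma(i)}+\Xi_i$ with $\Xi_i\in A_{S,V}$; and $AS_i=\operatorname{sign}(a_0)S_{\sigma(i)}+\bar\Xi_i$ with $\bar\Xi_i\in A_V$.
   Context: Fix integers $k\ge1$ and signs $\varepsilon_1,\dots,\varepsilon_k\in\{\pm1\}$. Let $V=\mathbb R^{3k+2}$ with basis $\{U_0,\dots,U_k,V_0,\dots,V_k,S_1,\dots,S_k\}$, let $(\cdot,\cdot)$ be the symmetric inner product whose only nonzero values on pairs of basis vectors are $(U_i,V_i)=(V_i,U_i)=1$ for $0\le i\le k$ and $(S_i,S_i)=\varepsilon_i$ for $1\le i\le k$, and let $R$ be the algebraic curvature tensor on $V$ (a 4-linear form with $R(x,y,z,w)=-R(y,x,z,w)=R(z,w,x,y)$ and $R(x,y,z,w)+R(y,z,x,w)+R(z,x,y,w)=0$) whose only nonzero values on 4-tuples of basis vectors are those obtained from $R(U_0,U_i,U_i,S_i)=1$ ($1\le i\le k$) by these symmetries. Set $\mathcal V=(V,(\cdot,\cdot),R)$. Define $A_V=\{\xi\in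 V: R(\xi,y,z,w)=0\ \forall y,z,w\}=\ker R$ (which equals $\mathrm{Span}\{V_0,\dots,V_k\}$) and $A_{S,V}=A_V^{\perp}$ (which equals $\mathrm{Span}\{S_1,\dots,S_k,V_0,\dots,V_k\}$). *)

theory Defs
  imports Complex_Main
begin

datatype bidx = BU nat | BV nat | BS nat

type_synonym vec = "bidx \<Rightarrow> real"

definition basis_idx :: "nat \<Rightarrow> bidx set" where
  "basis_idx k = {BU i | i. i \<le> k} \<union> {BV i | i. i \<le> k} \<union> {BS i | i. 1 \<le> i \<and> i \<le> k}"

definition Vsp :: "nat \<Rightarrow> vec set" where
  "Vsp k = {x. \<forall>b. b \<notin> basis_idx k \<longrightarrow> x b = 0}"

definition ebas :: "bidx \<Rightarrow> vec" where
  "ebas c = (\<lambda>b. if b = c then 1 else 0)"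

definition ip :: "nat \<Rightarrow> (nat \<Rightarrow> real) \<Rightarrow> vec \<Rightarrow> vec \<Rightarrow> real" where
  "ip k eps x y = (\<Sum>i\<le>k. x (BU i) * y (BV i) + x (BV i) * y (BU i))
                 + (\<Sum>i\<in>{1..k}. eps i * x (BS i) * y (BS i))"

text \<open>The algebraic curvature tensor generated by R(a,b,b,c)=1 with all its symmetric images.\<close>
definition Tabc :: "bidx \<Rightarrow> bidx \<Rightarrow> bidx \<Rightarrow> vec \<Rightarrow> vec \<Rightarrow> vec \<Rightarrow> vec \<Rightarrow> real" where
  "Tabc a b c x y z w =
      x a * y b * z b * w c - x b * y a * z b * w c
    - x a * y b * z c * w b + x b * y a * z c * w b
    + x b * y c * z a * w b - x c * y b * z a * w b
    - x b * y c * z b * w a + x c * y b * z b * w a"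

definition Rt :: "nat \<Rightarrow> vec \<Rightarrow> vec \<Rightarrow> vec \<Rightarrow> vec \<Rightarrow> real" where
  "Rt k x y z w = (\<Sum>i\<in>{1..k}. Tabc (BU 0) (BU i) (BS i) x y z w)"

definition AV :: "nat \<Rightarrow> vec set" where
  "AV k = {\<xi> \<in> Vsp k. \<forall>y\<in>Vsp k. \<forall>z\<in>Vsp k. \<forall>w\<in>Vsp k. Rt k \<xi> y z w = 0}"

definition ASV :: "nat \<Rightarrow> (nat \<Rightarrow> real) \<Rightarrow> vec set" where
  "ASV k eps = {x \<in> Vsp k. \<forall>\<xi>\<in>AV k. ip k eps x \<xi> = 0}"

definition model_iso :: "nat \<Rightarrow> (nat \<Rightarrow> real) \<Rightarrow> (vec \<Rightarrow> vec) \<Rightarrow> bool" where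
  "model_iso k eps A \<longleftrightarrow>
     bij_betw A (Vsp k) (Vsp k)
   \<and> (\<forall>x\<in>Vsp k. \<forall>y\<in>Vsp k. A (\<lambda>b. x b + y b) = (\<lambda>b. A x b + A y b))
   \<and> (\<forall>c. \<forall>x\<in>Vsp k. A (\<lambda>b. c * x b) = (\<lambda>b. c * A x b))
   \<and> (\<forall>x\<in>Vsp k. \<forall>y\<in>Vsp k. ip k eps (A x) (A y) = ip k eps x y)
   \<and> (\<forall>x\<in>Vsp k. \<forall>y\<in>Vsp k. \<forall>z\<in>Vsp k. \<forall>w\<in>Vsp k.
        Rt k (A x) (A y) (A z) (A w) = Rt k x y z w)"

end

theory Submission imports Defs begin

lemma basis_idx_eq: "basis_idx k = BU ` {..k} \<union> BV ` {..k} \<union> BS ` {1..k}"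
  unfolding basis_idx_def by auto

lemma finite_basis: "finite (basis_idx k)"
  unfolding basis_idx_eq by auto

lemma mem_basis[simp]: "BU i \<in> basis_idx k \<longleftrightarrow> i \<le> k" "BV i \<in> basis_idx k \<longleftrightarrow> i \<le> k"
  "BS i \<in> basis_idx k \<longleftrightarrow> 1 \<le> i \<and> i \<le> k"
  unfolding basis_idx_def by auto

lemma ebas_Vsp: "c \<in> basis_idx k \<Longrightarrow> ebas c \<in> Vsp k"
  unfolding Vsp_def ebas_def by auto

lemma ebas_simps[simp]: "ebas (BU i) (BU j) = (if j = i then 1 else 0)"
  "ebas (BV i) (BV j) = (if j = i then 1 else 0)"
  "ebas (BS i) (BS j) = (if j = i then 1 else 0)"
  "ebas (BU i) (BV j) = 0" "ebas (BU i) (BS j) = 0"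
  "ebas (BV i) (BU j) = 0" "ebas (BV i) (BS j) = 0"
  "ebas (BS i) (BU j) = 0" "ebas (BS i) (BV j) = 0"
  unfolding ebas_def by auto

lemma Vsp_out: "x \<in> Vsp k \<Longrightarrow> b \<notin> basis_idx k \<Longrightarrow> x b = 0"
  unfolding Vsp_def by auto

lemma Rt_expand: "Rt k x y z w = (\<Sum>i\<in>{1..k}.
   (x (BU 0) * y (BU i) - x (BU i) * y (BU 0)) * (z (BU i) * w (BS i) - z (BS i) * w (BU i))
 + (x (BU i) * y (BS i) - x (BS i) * y (BU i)) * (z (BU 0) * w (BU i) - z (BU i) * w (BU 0)))"
  unfolding Rt_def Tabc_def by (rule sum.cong) (auto simp: algebra_simps)

lemma sum_only: "finite S \<Longrightarrow> m \<in> S \<Longrightarrow> (\<And>i. i \<in> S \<Longrightarrow> i \<noteq> m \<Longrightarrow> f i = 0) \<Longrightarrow> sum f S = f m"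
  by (simp add: sum.remove)

lemma AV_coords:
  assumes "\<xi> \<in> AV k" "k \<ge> 1"
  shows "\<xi> (BU 0) = 0" "\<And>i. 1 \<le> i \<Longrightarrow> i \<le> k \<Longrightarrow> \<xi> (BU i) = 0"
     "\<And>i. 1 \<le> i \<Longrightarrow> i \<le> k \<Longrightarrow> \<xi> (BS i) = 0"
proof -
  have R0: "Rt k \<xi> y z w = 0" if "y \<in> Vsp k" "z \<in> Vsp k" "w \<in> Vsp k" for y z w
    using assms that unfolding AV_def by auto
  have "Rt k \<xi> (ebas (BU 1)) (ebas (BU 1)) (ebas (BS 1)) = \<xi> (BU 0)"
    unfolding Rt_expand using assms(2) by (subst sum_only[where m=1]) auto
  then show "\<xi> (BU 0) = 0" using R0 assms(2) by (simp add: ebas_Vsp)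
  fix i assume i: "1 \<le> i" "i \<le> k"
  have "Rt k \<xi> (ebas (BU 0)) (ebas (BU i)) (ebas (BS i)) = - \<xi> (BU i)"
    unfolding Rt_expand using i by (subst sum_only[where m=i]) auto
  then show "\<xi> (BU i) = 0" using R0 i by (simp add: ebas_Vsp)
  have "Rt k \<xi> (ebas (BU i)) (ebas (BU 0)) (ebas (BU i)) = - \<xi> (BS i)"
    unfolding Rt_expand using i by (subst sum_only[where m=i]) auto
  then show "\<xi> (BS i) = 0" using R0 i by (simp add: ebas_Vsp)
qed

lemma AV_intro:
  assumes "\<xi> \<in> Vsp k" "\<And>i. i \<le> k \<Longrightarrow> \<xi> (BU i) = 0" "\<And>i. 1 \<le> i \<Longrightarrow> i \<le> k \<Longrightarrow> \<xi> (BS i) = 0"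
  shows "\<xi> \<in> AV k"
  using assms unfolding AV_def Rt_expand by auto

lemma ASV_coords: "x \<in> ASV k eps \<Longrightarrow> i \<le> k \<Longrightarrow> x (BU i) = 0"
proof -
  assume x: "x \<in> ASV k eps" and i: "i \<le> k"
  have "ebas (BV i) \<in> AV k" by (rule AV_intro) (auto simp: ebas_Vsp i)
  then have "ip k eps x (ebas (BV i)) = 0" using x unfolding ASV_def by auto
  moreover have "ip k eps x (ebas (BV i)) = x (BU i)"
    unfolding ip_def using i by (subst sum_only[where m=i]) auto
  ultimately show ?thesis by simp
qed

lemma ASV_intro:
  assumes "x \<in> Vsp k" "\<And>i. i \<le> k \<Longrightarrow> x (BU i) = 0" "k \<ge> 1"
  shows "x \<in> ASV k eps"
  unfolding ASV_def
proof (intro CollectI conjI ballI)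
  show "x \<in> Vsp k" by fact
  fix \<xi> assume xi: "\<xi> \<in> AV k"
  have U: "\<xi> (BU i) = 0" if "i \<le> k" for i
    using AV_coords[OF xi assms(3)] that by (cases "i = 0") auto
  show "ip k eps x \<xi> = 0" unfolding ip_def
    using assms(2) U AV_coords(3)[OF xi assms(3)] by (auto intro!: sum.neutral)
qed


lemma Rt_lastS:
  assumes "w (BU 0) = 0" "\<And>i. 1 \<le> i \<Longrightarrow> i \<le> k \<Longrightarrow> w (BU i) = 0"
  shows "Rt k x y z w = (\<Sum>i\<in>{1..k}. (x (BU 0) * y (BU i) - x (BU i) * y (BU 0)) * z (BU i) * w (BS i))"
  unfolding Rt_expand using assms by (intro sum.cong) (auto simp: algebra_simps)

lemma RtUUUS:
  assumes "1 \<le> m" "m \<le> k"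
  shows "Rt k (ebas (BU r)) (ebas (BU s)) (ebas (BU t)) (ebas (BS m)) =
     (if r = 0 \<and> s = m \<and> t = m then 1 else 0) - (if r = m \<and> s = 0 \<and> t = m then 1 else 0)"
  using assms by (subst Rt_lastS) (auto simp: sum_only[where m=m])

context
  fixes k :: nat and eps :: "nat \<Rightarrow> real" and A :: "vec \<Rightarrow> vec"
  assumes k2: "k \<ge> 2"
    and epsv: "\<forall>i\<in>{1..k}. eps i = 1 \<or> eps i = -1"
    and iso: "model_iso k eps A"
begin

lemma k1: "k \<ge> 1" using k2 by simp

lemma A_Vsp: "x \<in> Vsp k \<Longrightarrow> A x \<in> Vsp k"
  using iso unfolding model_iso_def bij_betw_def by auto

lemma A_surj: "y \<in> Vsp k \<Longrightarrow> \<exists>x\<in>Vsp k. A x = y"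
  using iso unfolding model_iso_def bij_betw_def by (metis imageE)

lemma A_add: "x \<in> Vsp k \<Longrightarrow> y \<in> Vsp k \<Longrightarrow> A (\<lambda>b. x b + y b) = (\<lambda>b. A x b + A y b)"
  using iso unfolding model_iso_def by auto

lemma A_scale: "x \<in> Vsp k \<Longrightarrow> A (\<lambda>b. c * x b) = (\<lambda>b. c * A x b)"
  using iso unfolding model_iso_def by auto

lemma A_ip: "x \<in> Vsp k \<Longrightarrow> y \<in> Vsp k \<Longrightarrow> ip k eps (A x) (A y) = ip k eps x y"
  using iso unfolding model_iso_def by auto

lemma A_Rt: "x \<in> Vsp k \<Longrightarrow> y \<in> Vsp k \<Longrightarrow> z \<in> Vsp k \<Longrightarrow> w \<in> Vsp k \<Longrightarrow>
   Rt k (A x) (A y) (A z) (A w) = Rt k x y z w"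
  using iso unfolding model_iso_def by auto

lemma AV_fwd: assumes "x \<in> AV k" shows "A x \<in> AV k"
proof -
  have x: "x \<in> Vsp k" using assms unfolding AV_def by auto
  have "Rt k (A x) y z w = 0" if "y \<in> Vsp k" "z \<in> Vsp k" "w \<in> Vsp k" for y z w
  proof -
    obtain y' where "y' \<in> Vsp k" "A y' = y" using A_surj[OF \<open>y \<in> Vsp k\<close>] by blast
    moreover obtain z' where "z' \<in> Vsp k" "A z' = z" using A_surj[OF \<open>z \<in> Vsp k\<close>] by blast
    moreover obtain w' where "w' \<in> Vsp k" "A w' = w" using A_surj[OF \<open>w \<in> Vsp k\<close>] by blast
    ultimately show ?thesis using A_Rt[OF x] assms unfolding AV_def by auto
  qed
  then show ?thesis unfolding AV_def using A_Vsp[OF x] by auto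
qed

lemma AV_bwd: assumes "x \<in> Vsp k" "A x \<in> AV k" shows "x \<in> AV k"
proof -
  have "Rt k x y z w = 0" if "y \<in> Vsp k" "z \<in> Vsp k" "w \<in> Vsp k" for y z w
  proof -
    have "Rt k x y z w = Rt k (A x) (A y) (A z) (A w)" using A_Rt assms(1) that by simp
    also have "\<dots> = 0" using assms(2) A_Vsp that unfolding AV_def by simp
    finally show ?thesis .
  qed
  then show ?thesis unfolding AV_def using assms by auto
qed

lemma ASV_fwd: assumes "x \<in> ASV k eps" shows "A x \<in> ASV k eps"
proof -
  have x: "x \<in> Vsp k" using assms unfolding ASV_def by auto
  have "ip k eps (A x) \<xi> = 0" if "\<xi> \<in> AV k" for \<xi>
  proof -
    have "\<xi> \<in> Vsp k" using that unfolding AV_def by auto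
    then obtain \<xi>' where \<xi>': "\<xi>' \<in> Vsp k" "A \<xi>' = \<xi>" using A_surj by blast
    then have "\<xi>' \<in> AV k" using AV_bwd that by auto
    then show ?thesis using A_ip[OF x \<xi>'(1)] \<xi>' assms unfolding ASV_def by auto
  qed
  then show ?thesis unfolding ASV_def using A_Vsp[OF x] by auto
qed

lemma ASV_bwd: assumes "x \<in> Vsp k" "A x \<in> ASV k eps" shows "x \<in> ASV k eps"
proof -
  have "ip k eps x \<xi> = 0" if "\<xi> \<in> AV k" for \<xi>
  proof -
    have "\<xi> \<in> Vsp k" using that unfolding AV_def by auto
    then show ?thesis using A_ip[OF assms(1)] AV_fwd[OF that] assms unfolding ASV_def by auto
  qed
  then show ?thesis unfolding ASV_def using assms by auto
qed

lemma Vsp_sum: "finite F \<Longrightarrow> (\<And>c. c \<in> F \<Longrightarrow> v c \<in> Vsp k) \<Longrightarrow> (\<lambda>b. \<Sum>c\<in>F. f c * v c b) \<in> Vsp k"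
  unfolding Vsp_def by auto

lemma A_zero: "A (\<lambda>b. 0) = (\<lambda>b. 0)"
proof -
  have z: "(\<lambda>b. 0::real) \<in> Vsp k" unfolding Vsp_def by auto
  have "A (\<lambda>b. 0 * (\<lambda>b. 0::real) b) = (\<lambda>b. 0 * A (\<lambda>b. 0) b)" by (rule A_scale[OF z])
  then show ?thesis by simp
qed

lemma A_sum: "finite F \<Longrightarrow> (\<And>c. c \<in> F \<Longrightarrow> v c \<in> Vsp k) \<Longrightarrow>
   A (\<lambda>b. \<Sum>c\<in>F. f c * v c b) = (\<lambda>b. \<Sum>c\<in>F. f c * A (v c) b)"
proof (induction F rule: finite_induct)
  case empty then show ?case using A_zero by simp
next
  case (insert a F)
  have va: "v a \<in> Vsp k" using insert by auto
  have s1: "(\<lambda>b. f a * v a b) \<in> Vsp k" using va unfolding Vsp_def by auto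
  have s2: "(\<lambda>b. \<Sum>c\<in>F. f c * v c b) \<in> Vsp k" using insert by (intro Vsp_sum) auto
  have "A (\<lambda>b. \<Sum>c\<in>insert a F. f c * v c b) = A (\<lambda>b. (\<lambda>b. f a * v a b) b + (\<lambda>b. \<Sum>c\<in>F. f c * v c b) b)"
    using insert by simp
  also have "\<dots> = (\<lambda>b. A (\<lambda>b. f a * v a b) b + A (\<lambda>b. \<Sum>c\<in>F. f c * v c b) b)"
    by (rule A_add[OF s1 s2])
  also have "\<dots> = (\<lambda>b. \<Sum>c\<in>insert a F. f c * A (v c) b)"
    using insert A_scale[OF va] by simp
  finally show ?case .
qed

lemma Vsp_expand: "x \<in> Vsp k \<Longrightarrow> x = (\<lambda>b. \<Sum>c\<in>basis_idx k. x c * ebas c b)"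
proof
  fix b assume x: "x \<in> Vsp k"
  show "x b = (\<Sum>c\<in>basis_idx k. x c * ebas c b)"
  proof (cases "b \<in> basis_idx k")
    case True then show ?thesis
      by (subst sum_only[where m=b]) (auto simp: finite_basis ebas_def)
  next
    case False then show ?thesis using Vsp_out[OF x False]
      by (auto simp: ebas_def intro!: sum.neutral)
  qed
qed

lemma A_apply: "x \<in> Vsp k \<Longrightarrow> A x b = (\<Sum>c\<in>basis_idx k. x c * A (ebas c) b)"
proof -
  assume x: "x \<in> Vsp k"
  have "A x = A (\<lambda>b. \<Sum>c\<in>basis_idx k. x c * ebas c b)" using Vsp_expand[OF x] by simp
  also have "\<dots> = (\<lambda>b. \<Sum>c\<in>basis_idx k. x c * A (ebas c) b)"
    by (rule A_sum) (auto simp: finite_basis ebas_Vsp)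
  finally show ?thesis by simp
qed


definition "aa r = A (ebas (BU r)) (BU 0)"
definition "BB i r = A (ebas (BU r)) (BU i)"
definition "CC i r = A (ebas (BU r)) (BS i)"
definition "DD j m = A (ebas (BS m)) (BS j)"
definition "yinv i = inv_into (Vsp k) A (ebas (BS i))"
definition "GG m i = yinv i (BS m)"

lemma S_ASV: "1 \<le> m \<Longrightarrow> m \<le> k \<Longrightarrow> ebas (BS m) \<in> ASV k eps"
  by (rule ASV_intro) (auto simp: ebas_Vsp k1)

lemma AS_U: "1 \<le> m \<Longrightarrow> m \<le> k \<Longrightarrow> j \<le> k \<Longrightarrow> A (ebas (BS m)) (BU j) = 0"
  using ASV_coords[OF ASV_fwd[OF S_ASV]] by blast

lemma AV_V: "l \<le> k \<Longrightarrow> 1 \<le> j \<Longrightarrow> j \<le> k \<Longrightarrow> A (ebas (BV l)) (BS j) = 0"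
proof -
  assume l: "l \<le> k" and j: "1 \<le> j" "j \<le> k"
  have "ebas (BV l) \<in> AV k" by (rule AV_intro) (auto simp: ebas_Vsp l)
  from AV_coords(3)[OF AV_fwd[OF this] k1 j] show ?thesis .
qed

lemma yinv_props:
  assumes "1 \<le> i" "i \<le> k"
  shows "yinv i \<in> Vsp k" "A (yinv i) = ebas (BS i)" "yinv i \<in> ASV k eps"
proof -
  have e: "ebas (BS i) \<in> A ` Vsp k" using iso assms unfolding model_iso_def bij_betw_def
    by (auto simp: ebas_Vsp)
  show y: "yinv i \<in> Vsp k" unfolding yinv_def using inv_into_into[OF e] .
  show Ay: "A (yinv i) = ebas (BS i)" unfolding yinv_def using f_inv_into_f[OF e] .
  show "yinv i \<in> ASV k eps" using ASV_bwd[OF y] Ay S_ASV assms by simp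
qed

lemma DG:
  assumes "1 \<le> j" "j \<le> k" "1 \<le> i" "i \<le> k"
  shows "(\<Sum>m\<in>{1..k}. DD j m * GG m i) = (if j = i then 1 else 0)"
proof -
  note yp = yinv_props[OF assms(3,4)]
  have "(if j = i then 1 else 0) = A (yinv i) (BS j)" using yp by simp
  also have "\<dots> = (\<Sum>c\<in>basis_idx k. yinv i c * A (ebas c) (BS j))"
    by (rule A_apply[OF yp(1)])
  also have "\<dots> = (\<Sum>c\<in>BS ` {1..k}. yinv i c * A (ebas c) (BS j))"
  proof -
    have z: "\<forall>c\<in>basis_idx k - BS ` {1..k}. yinv i c * A (ebas c) (BS j) = 0"
    proof
      fix c assume c: "c \<in> basis_idx k - BS ` {1..k}"
      show "yinv i c * A (ebas c) (BS j) = 0"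
      proof (cases c)
        case (BU l) then show ?thesis using c ASV_coords[OF yp(3)] by auto
      next
        case (BV l) then show ?thesis using c AV_V assms by auto
      next
        case (BS l) then show ?thesis using c by auto
      qed
    qed
    have sub: "BS ` {1..k} \<subseteq> basis_idx k" by auto
    show ?thesis using sum.mono_neutral_right[OF finite_basis sub z] .
  qed
  also have "\<dots> = (\<Sum>m\<in>{1..k}. DD j m * GG m i)"
    by (subst sum.reindex) (auto simp: inj_on_def DD_def GG_def mult.commute)
  finally show ?thesis by simp
qed

lemma E1:
  assumes "r \<le> k" "s \<le> k" "t \<le> k" "1 \<le> m" "m \<le> k"
  shows "(\<Sum>i\<in>{1..k}. (aa r * BB i s - BB i r * aa s) * BB i t * DD i m)
       = Rt k (ebas (BU r)) (ebas (BU s)) (ebas (BU t)) (ebas (BS m))"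
proof -
  have "Rt k (ebas (BU r)) (ebas (BU s)) (ebas (BU t)) (ebas (BS m))
     = Rt k (A (ebas (BU r))) (A (ebas (BU s))) (A (ebas (BU t))) (A (ebas (BS m)))"
    using assms by (intro A_Rt[symmetric]) (auto simp: ebas_Vsp)
  also have "\<dots> = (\<Sum>i\<in>{1..k}. (aa r * BB i s - BB i r * aa s) * BB i t * DD i m)"
    using assms by (subst Rt_lastS) (auto simp: AS_U aa_def BB_def DD_def)
  finally show ?thesis by simp
qed

definition "XX i r s t = (aa r * BB i s - BB i r * aa s) * BB i t"

lemma KEY:
  assumes "1 \<le> i" "i \<le> k" "r \<le> k" "s \<le> k" "t \<le> k"
  shows "XX i r s t = (\<Sum>m\<in>{1..k}. GG m i * Rt k (ebas (BU r)) (ebas (BU s)) (ebas (BU t)) (ebas (BS m)))"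
proof -
  have "(\<Sum>m\<in>{1..k}. GG m i * Rt k (ebas (BU r)) (ebas (BU s)) (ebas (BU t)) (ebas (BS m)))
      = (\<Sum>m\<in>{1..k}. GG m i * (\<Sum>j\<in>{1..k}. XX j r s t * DD j m))"
    using assms by (intro sum.cong) (auto simp: E1[symmetric] XX_def)
  also have "\<dots> = (\<Sum>j\<in>{1..k}. XX j r s t * (\<Sum>m\<in>{1..k}. DD j m * GG m i))"
  proof -
    have "(\<Sum>m\<in>{1..k}. GG m i * (\<Sum>j\<in>{1..k}. XX j r s t * DD j m))
       = (\<Sum>m\<in>{1..k}. \<Sum>j\<in>{1..k}. XX j r s t * (DD j m * GG m i))"
      by (simp add: sum_distrib_left mult_ac)
    also have "\<dots> = (\<Sum>j\<in>{1..k}. \<Sum>m\<in>{1..k}. XX j r s t * (DD j m * GG m i))"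
      by (rule sum.swap)
    also have "\<dots> = (\<Sum>j\<in>{1..k}. XX j r s t * (\<Sum>m\<in>{1..k}. DD j m * GG m i))"
      by (simp add: sum_distrib_left)
    finally show ?thesis .
  qed
  also have "\<dots> = (\<Sum>j\<in>{1..k}. XX j r s t * (if j = i then 1 else 0))"
  proof (intro sum.cong refl)
    fix j assume "j \<in> {1..k}"
    then show "XX j r s t * (\<Sum>m\<in>{1..k}. DD j m * GG m i) = XX j r s t * (if j = i then 1 else 0)"
      using DG[of j i] assms by simp
  qed
  also have "\<dots> = XX i r s t" using assms by (subst sum_only[where m=i]) auto
  finally show ?thesis by simp
qed

lemma K1: assumes "1 \<le> i" "i \<le> k" "1 \<le> s" "s \<le> k"
  shows "(aa 0 * BB i s - BB i 0 * aa s) * BB i s = GG s i"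
proof -
  have "(\<Sum>m\<in>{1..k}. GG m i * Rt k (ebas (BU 0)) (ebas (BU s)) (ebas (BU s)) (ebas (BS m)))
     = (\<Sum>m\<in>{1..k}. GG m i * (if m = s then 1 else 0))"
    by (intro sum.cong) (auto simp: RtUUUS)
  also have "\<dots> = GG s i" using assms by (subst sum_only[where m=s]) auto
  finally show ?thesis using KEY[of i 0 s s] assms unfolding XX_def by simp
qed

lemma K2: assumes "1 \<le> i" "i \<le> k" "1 \<le> s" "s \<le> k" "t \<le> k" "t \<noteq> s"
  shows "(aa 0 * BB i s - BB i 0 * aa s) * BB i t = 0"
proof -
  have "(\<Sum>m\<in>{1..k}. GG m i * Rt k (ebas (BU 0)) (ebas (BU s)) (ebas (BU t)) (ebas (BS m))) = 0"
    using assms by (intro sum.neutral) (auto simp: RtUUUS)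
  then show ?thesis using KEY[of i 0 s t] assms unfolding XX_def by simp
qed

lemma K3: assumes "1 \<le> i" "i \<le> k" "1 \<le> r" "r \<le> k" "1 \<le> s" "s \<le> k" "t \<le> k"
  shows "(aa r * BB i s - BB i r * aa s) * BB i t = 0"
proof -
  have "(\<Sum>m\<in>{1..k}. GG m i * Rt k (ebas (BU r)) (ebas (BU s)) (ebas (BU t)) (ebas (BS m))) = 0"
    using assms by (intro sum.neutral) (auto simp: RtUUUS)
  then show ?thesis using KEY[of i r s t] assms unfolding XX_def by simp
qed


lemma exG: assumes "1 \<le> i" "i \<le> k" shows "\<exists>m. 1 \<le> m \<and> m \<le> k \<and> GG m i \<noteq> 0"
proof (rule ccontr)
  assume "\<not> ?thesis"
  then have "(\<Sum>m\<in>{1..k}. DD i m * GG m i) = 0" by (intro sum.neutral) auto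
  then show False using DG[of i i] assms by simp
qed

definition "tau i = (SOME m. 1 \<le> m \<and> m \<le> k \<and> GG m i \<noteq> 0)"

lemma tau_props: assumes "1 \<le> i" "i \<le> k" shows "1 \<le> tau i" "tau i \<le> k" "GG (tau i) i \<noteq> 0"
  using someI_ex[OF exG[OF assms]] unfolding tau_def by auto

lemma tau_facts:
  assumes i: "1 \<le> i" "i \<le> k"
  shows "BB i (tau i) \<noteq> 0"
    and "\<And>t. t \<le> k \<Longrightarrow> t \<noteq> tau i \<Longrightarrow> BB i t = 0"
    and "\<And>m. 1 \<le> m \<Longrightarrow> m \<le> k \<Longrightarrow> m \<noteq> tau i \<Longrightarrow> GG m i = 0"
    and "GG (tau i) i = aa 0 * (BB i (tau i))\<^sup>2"
    and "\<And>r. 1 \<le> r \<Longrightarrow> r \<le> k \<Longrightarrow> r \<noteq> tau i \<Longrightarrow> aa r = 0"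
proof -
  note tp = tau_props[OF i]
  have k1e: "(aa 0 * BB i (tau i) - BB i 0 * aa (tau i)) * BB i (tau i) = GG (tau i) i"
    using K1[OF i tp(1,2)] .
  then have nz1: "aa 0 * BB i (tau i) - BB i 0 * aa (tau i) \<noteq> 0" and nz2: "BB i (tau i) \<noteq> 0"
    using tp(3) by auto
  show "BB i (tau i) \<noteq> 0" by (rule nz2)
  show Bz: "BB i t = 0" if "t \<le> k" "t \<noteq> tau i" for t
    using K2[OF i tp(1,2) that] nz1 by simp
  show "GG m i = 0" if "1 \<le> m" "m \<le> k" "m \<noteq> tau i" for m
    using K1[OF i that(1,2)] Bz[OF that(2,3)] by simp
  show "GG (tau i) i = aa 0 * (BB i (tau i))\<^sup>2"
    using k1e Bz[of 0] tp by (simp add: power2_eq_square)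
  show "aa r = 0" if "1 \<le> r" "r \<le> k" "r \<noteq> tau i" for r
    using K3[OF i that(1,2) tp(1,2) tp(2)] Bz[OF that(2,3)] nz2 by simp
qed

lemma DG_tau: assumes "1 \<le> i" "i \<le> k" "1 \<le> j" "j \<le> k"
  shows "DD j (tau i) * GG (tau i) i = (if j = i then 1 else 0)"
proof -
  have "(\<Sum>m\<in>{1..k}. DD j m * GG m i) = DD j (tau i) * GG (tau i) i"
    using assms tau_props[OF assms(1,2)] tau_facts(3)[OF assms(1,2)]
    by (subst sum_only[where m="tau i"]) auto
  then show ?thesis using DG[OF assms(3,4,1,2)] by simp
qed

lemma tau_inj: "inj_on tau {1..k}"
proof (rule inj_onI, rule ccontr)
  fix i i' assume i: "i \<in> {1..k}" "i' \<in> {1..k}" "tau i = tau i'" "i \<noteq> i'"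
  have a: "DD i (tau i) * GG (tau i) i = 1" using DG_tau[of i i] i by simp
  have b: "DD i (tau i') * GG (tau i') i' = 0" using DG_tau[of i' i] i by simp
  have "GG (tau i') i' \<noteq> 0" using tau_props i by simp
  then show False using a b i(3) by simp
qed

lemma a0_ne: "aa 0 \<noteq> 0"
proof -
  have "GG (tau 1) 1 \<noteq> 0" using tau_props(3)[of 1] k1 by simp
  then have "aa 0 * (BB 1 (tau 1))\<^sup>2 \<noteq> 0" using tau_facts(4)[of 1] k1 by simp
  then show ?thesis by auto
qed

lemma a_zero: assumes "1 \<le> r" "r \<le> k" shows "aa r = 0"
proof -
  have m1: "(1::nat) \<in> {1..k}" and m2: "(2::nat) \<in> {1..k}" using k2 by auto
  have "tau 1 \<noteq> tau 2"
  proof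
    assume "tau 1 = tau 2"
    then have "(1::nat) = 2" using inj_onD[OF tau_inj _ m1 m2] by blast
    then show False by simp
  qed
  then have "r \<noteq> tau 1 \<or> r \<noteq> tau 2" by auto
  then show ?thesis
  proof
    assume "r \<noteq> tau 1" then show ?thesis using tau_facts(5)[of 1 r] assms k2 by simp
  next
    assume "r \<noteq> tau 2" then show ?thesis using tau_facts(5)[of 2 r] assms k2 by simp
  qed
qed

lemma tau_bij: "bij_betw tau {1..k} {1..k}"
proof -
  have "tau ` {1..k} \<subseteq> {1..k}" using tau_props by auto
  then have "tau ` {1..k} = {1..k}" using endo_inj_surj tau_inj by blast
  then show ?thesis using tau_inj unfolding bij_betw_def by blast
qed

lemma D_tau: assumes "1 \<le> i" "i \<le> k" "1 \<le> j" "j \<le> k"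
  shows "DD j (tau i) = (if j = i then 1 / (aa 0 * (BB i (tau i))\<^sup>2) else 0)"
proof -
  have g: "GG (tau i) i \<noteq> 0" using tau_props(3)[OF assms(1,2)] .
  have "DD j (tau i) = (if j = i then 1 else 0) / GG (tau i) i"
    using DG_tau[OF assms] g by (simp add: eq_divide_eq)
  then show ?thesis using tau_facts(4)[OF assms(1,2)] by simp
qed

lemma ip_SS: "1 \<le> p \<Longrightarrow> p \<le> k \<Longrightarrow> ip k eps (ebas (BS p)) (ebas (BS p)) = eps p"
  unfolding ip_def by (subst sum_only[where m=p, of "{1..k}"]) auto

lemma ip_AS: assumes "1 \<le> p" "p \<le> k"
  shows "ip k eps (A (ebas (BS p))) (A (ebas (BS p))) = (\<Sum>j\<in>{1..k}. eps j * DD j p * DD j p)"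
  unfolding ip_def DD_def using AS_U[OF assms] by simp

lemma scal: assumes "1 \<le> i" "i \<le> k"
  shows "\<bar>aa 0\<bar> * (BB i (tau i))\<^sup>2 = 1" "1 / (aa 0 * (BB i (tau i))\<^sup>2) = sgn (aa 0)"
proof -
  note tp = tau_props[OF assms]
  define c where "c = aa 0 * (BB i (tau i))\<^sup>2"
  have "eps (tau i) = ip k eps (A (ebas (BS (tau i)))) (A (ebas (BS (tau i))))"
    using ip_SS tp A_ip ebas_Vsp by simp
  also have "\<dots> = (\<Sum>j\<in>{1..k}. eps j * DD j (tau i) * DD j (tau i))" using ip_AS tp by simp
  also have "\<dots> = eps i * (1 / c) * (1 / c)"
    using assms by (subst sum_only[where m=i]) (auto simp: D_tau c_def)
  finally have e: "eps (tau i) = eps i / c^2" by (simp add: power2_eq_square)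
  have c0: "c \<noteq> 0" using tau_facts(1)[OF assms] a0_ne unfolding c_def by simp
  have "eps i = 1 \<or> eps i = -1" "eps (tau i) = 1 \<or> eps (tau i) = -1" using epsv assms tp by auto
  moreover have "c^2 > 0" using c0 by simp
  ultimately have "c^2 = 1"
  proof -
    have e2: "eps (tau i) * c^2 = eps i" using e c0 by (simp add: field_simps)
    have "c^2 \<ge> 0" by simp
    then have "c^2 \<noteq> -1" by linarith
    then show ?thesis using e2 \<open>eps i = 1 \<or> eps i = -1\<close> \<open>eps (tau i) = 1 \<or> eps (tau i) = -1\<close>
      by auto
  qed
  then have cc: "c = 1 \<or> c = -1" by (simp add: power2_eq_1_iff)
  have bpos: "(BB i (tau i))\<^sup>2 > 0" using tau_facts(1)[OF assms] by simp
  have ac: "\<bar>c\<bar> = 1" using cc by auto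
  show "\<bar>aa 0\<bar> * (BB i (tau i))\<^sup>2 = 1" using ac unfolding c_def by (simp add: abs_mult)
  show "1 / (aa 0 * (BB i (tau i))\<^sup>2) = sgn (aa 0)"
  proof -
    have p: "c > 0" if "aa 0 > 0" using that bpos unfolding c_def by simp
    have n: "c < 0" if "aa 0 < 0" using that bpos unfolding c_def by (simp add: mult_neg_pos)
    have "1 / c = sgn (aa 0)"
    proof (cases "c = 1")
      case True
      then have "\<not> aa 0 < 0" using n by auto
      then have "aa 0 > 0" using a0_ne by linarith
      then show ?thesis using True by simp
    next
      case False
      then have c1: "c = -1" using cc by simp
      then have "\<not> aa 0 > 0" using p by auto
      then have "aa 0 < 0" using a0_ne by linarith
      then show ?thesis using c1 by simp
    qed
    then show ?thesis unfolding c_def .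
  qed
qed


lemma C_zero: assumes j: "1 \<le> j" "j \<le> k" shows "CC j 0 = 0"
proof -
  define m where "m = tau j"
  have m: "1 \<le> m" "m \<le> k" using tau_props[OF j] unfolding m_def by auto
  have x_U: "A (ebas (BU 0)) (BU i) = 0" if "1 \<le> i" "i \<le> k" for i
    using tau_facts(2)[OF that, of 0] tau_props[OF that] unfolding BB_def by simp
  have y_U0: "A (ebas (BU m)) (BU 0) = 0" using a_zero[OF m] unfolding aa_def .
  have Bz: "BB i m = 0" if "1 \<le> i" "i \<le> k" "i \<noteq> j" for i
  proof -
    have "tau i \<noteq> m"
    proof
      assume "tau i = m"
      then have "tau i = tau j" unfolding m_def .
      then have "i = j" using inj_onD[OF tau_inj] that j by auto
      then show False using that by simp
    qed
    then show ?thesis using tau_facts(2)[OF that(1,2) m(2)] by simp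
  qed
  have "0 = Rt k (ebas (BU 0)) (ebas (BU m)) (ebas (BU m)) (ebas (BU 0))"
    unfolding Rt_expand by (rule sum.neutral[symmetric]) auto
  also have "\<dots> = Rt k (A (ebas (BU 0))) (A (ebas (BU m))) (A (ebas (BU m))) (A (ebas (BU 0)))"
    using m by (intro A_Rt[symmetric]) (auto simp: ebas_Vsp)
  also have "\<dots> = (\<Sum>i\<in>{1..k}. 2 * aa 0 * (BB i m)\<^sup>2 * CC i 0)"
    unfolding Rt_expand
  proof (intro sum.cong refl)
    fix i assume "i \<in> {1..k}"
    then show "(A (ebas (BU 0)) (BU 0) * A (ebas (BU m)) (BU i) - A (ebas (BU 0)) (BU i) * A (ebas (BU m)) (BU 0)) *
          (A (ebas (BU m)) (BU i) * A (ebas (BU 0)) (BS i) - A (ebas (BU m)) (BS i) * A (ebas (BU 0)) (BU i)) +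
          (A (ebas (BU 0)) (BU i) * A (ebas (BU m)) (BS i) - A (ebas (BU 0)) (BS i) * A (ebas (BU m)) (BU i)) *
          (A (ebas (BU m)) (BU 0) * A (ebas (BU 0)) (BU i) - A (ebas (BU m)) (BU i) * A (ebas (BU 0)) (BU 0)) =
          2 * aa 0 * (BB i m)\<^sup>2 * CC i 0"
      using x_U y_U0 unfolding aa_def BB_def CC_def by (simp add: power2_eq_square algebra_simps)
  qed
  also have "\<dots> = 2 * aa 0 * (BB j m)\<^sup>2 * CC j 0"
    using j Bz by (subst sum_only[where m=j]) auto
  finally have "2 * aa 0 * (BB j m)\<^sup>2 * CC j 0 = 0" by simp
  moreover have "BB j m \<noteq> 0" using tau_facts(1)[OF j] unfolding m_def .
  ultimately show ?thesis using a0_ne by simp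
qed

lemma Vsp_comb: "x \<in> Vsp k \<Longrightarrow> y \<in> Vsp k \<Longrightarrow> (\<lambda>b. x b - c * y b) \<in> Vsp k"
  unfolding Vsp_def by auto

lemma main:
  shows "\<exists>\<sigma> :: nat \<Rightarrow> nat. \<exists>a0 :: real. \<exists>b :: nat \<Rightarrow> real.
           bij_betw \<sigma> {1..k} {1..k}
         \<and> (\<forall>i\<in>{1..k}. \<bar>a0\<bar> * (b i)\<^sup>2 = 1)
         \<and> (\<exists>\<xi>\<in>AV k. A (ebas (BU 0)) = (\<lambda>x. a0 * ebas (BU 0) x + \<xi> x))
         \<and> (\<forall>i\<in>{1..k}.
              (\<exists>\<xi>\<in>ASV k eps. A (ebas (BU i)) = (\<lambda>x. b i * ebas (BU (\<sigma> i)) x + \<xi> x))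
            \<and> (\<exists>\<xi>\<in>AV k. A (ebas (BS i)) = (\<lambda>x. sgn a0 * ebas (BS (\<sigma> i)) x + \<xi> x)))"
proof -
  define \<sigma> where "\<sigma> = inv_into {1..k} tau"
  define b where "b p = BB (\<sigma> p) p" for p
  have sb: "bij_betw \<sigma> {1..k} {1..k}" unfolding \<sigma>_def by (rule bij_betw_inv_into[OF tau_bij])
  have st: "tau (\<sigma> p) = p" "1 \<le> \<sigma> p" "\<sigma> p \<le> k" if "1 \<le> p" "p \<le> k" for p
  proof -
    show "tau (\<sigma> p) = p" unfolding \<sigma>_def using bij_betw_inv_into_right[OF tau_bij] that by simp
    have "\<sigma> p \<in> {1..k}" using sb that unfolding bij_betw_def by auto
    then show "1 \<le> \<sigma> p" "\<sigma> p \<le> k" by auto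
  qed
  have seq: "\<sigma> p = i" if "1 \<le> i" "i \<le> k" "tau i = p" for i p
    unfolding \<sigma>_def using inv_into_f_eq[OF tau_inj] that by auto
  have U0V: "A (ebas (BU 0)) \<in> Vsp k" by (rule A_Vsp) (simp add: ebas_Vsp)
  have P2: "\<forall>i\<in>{1..k}. \<bar>aa 0\<bar> * (b i)\<^sup>2 = 1"
  proof
    fix p assume "p \<in> {1..k}"
    then have p: "1 \<le> p" "p \<le> k" by auto
    have "\<bar>aa 0\<bar> * (BB (\<sigma> p) (tau (\<sigma> p)))\<^sup>2 = 1" using scal(1)[OF st(2,3)[OF p]] .
    then show "\<bar>aa 0\<bar> * (b p)\<^sup>2 = 1" using st(1)[OF p] unfolding b_def by simp
  qed
  have P3: "\<exists>\<xi>\<in>AV k. A (ebas (BU 0)) = (\<lambda>x. aa 0 * ebas (BU 0) x + \<xi> x)"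
  proof (intro bexI)
    show "A (ebas (BU 0)) = (\<lambda>x. aa 0 * ebas (BU 0) x + (\<lambda>x. A (ebas (BU 0)) x - aa 0 * ebas (BU 0) x) x)"
      by simp
    show "(\<lambda>x. A (ebas (BU 0)) x - aa 0 * ebas (BU 0) x) \<in> AV k"
    proof (rule AV_intro)
      show "(\<lambda>x. A (ebas (BU 0)) x - aa 0 * ebas (BU 0) x) \<in> Vsp k"
        by (rule Vsp_comb[OF U0V]) (simp add: ebas_Vsp)
      fix i assume i: "i \<le> k"
      show "A (ebas (BU 0)) (BU i) - aa 0 * ebas (BU 0) (BU i) = 0"
      proof (cases "i = 0")
        case True then show ?thesis by (simp add: aa_def)
      next
        case False
        then have i1: "1 \<le> i" by simp
        then show ?thesis using tau_facts(2)[OF i1 i, of 0] tau_props[OF i1 i] False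
          by (simp add: BB_def)
      qed
    next
      fix i assume "1 \<le> i" "i \<le> k"
      then show "A (ebas (BU 0)) (BS i) - aa 0 * ebas (BU 0) (BS i) = 0"
        using C_zero by (simp add: CC_def)
    qed
  qed
  have P4: "(\<exists>\<xi>\<in>ASV k eps. A (ebas (BU p)) = (\<lambda>x. b p * ebas (BU (\<sigma> p)) x + \<xi> x))
            \<and> (\<exists>\<xi>\<in>AV k. A (ebas (BS p)) = (\<lambda>x. sgn (aa 0) * ebas (BS (\<sigma> p)) x + \<xi> x))"
    if p: "1 \<le> p" "p \<le> k" for p
  proof
    note sp = st[OF p]
    show "\<exists>\<xi>\<in>ASV k eps. A (ebas (BU p)) = (\<lambda>x. b p * ebas (BU (\<sigma> p)) x + \<xi> x)"
    proof (intro bexI)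
      show "A (ebas (BU p)) = (\<lambda>x. b p * ebas (BU (\<sigma> p)) x + (\<lambda>x. A (ebas (BU p)) x - b p * ebas (BU (\<sigma> p)) x) x)"
        by simp
      show "(\<lambda>x. A (ebas (BU p)) x - b p * ebas (BU (\<sigma> p)) x) \<in> ASV k eps"
      proof (rule ASV_intro)
        show "(\<lambda>x. A (ebas (BU p)) x - b p * ebas (BU (\<sigma> p)) x) \<in> Vsp k"
          using p sp by (intro Vsp_comb A_Vsp) (auto simp: ebas_Vsp)
        show "1 \<le> k" by (rule k1)
        fix i assume i: "i \<le> k"
        show "A (ebas (BU p)) (BU i) - b p * ebas (BU (\<sigma> p)) (BU i) = 0"
        proof (cases "i = 0")
          case True then show ?thesis using a_zero[OF p] sp by (simp add: aa_def)
        next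
          case False
          then have i1: "1 \<le> i" by simp
          show ?thesis
          proof (cases "i = \<sigma> p")
            case True then show ?thesis by (simp add: b_def BB_def)
          next
            case ne: False
            have "tau i \<noteq> p" using seq[OF i1 i] ne by auto
            then show ?thesis using tau_facts(2)[OF i1 i p(2)] ne by (simp add: BB_def)
          qed
        qed
      qed
    qed
    show "\<exists>\<xi>\<in>AV k. A (ebas (BS p)) = (\<lambda>x. sgn (aa 0) * ebas (BS (\<sigma> p)) x + \<xi> x)"
    proof (intro bexI)
      show "A (ebas (BS p)) = (\<lambda>x. sgn (aa 0) * ebas (BS (\<sigma> p)) x + (\<lambda>x. A (ebas (BS p)) x - sgn (aa 0) * ebas (BS (\<sigma> p)) x) x)"
        by simp
      show "(\<lambda>x. A (ebas (BS p)) x - sgn (aa 0) * ebas (BS (\<sigma> p)) x) \<in> AV k"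
      proof (rule AV_intro)
        show "(\<lambda>x. A (ebas (BS p)) x - sgn (aa 0) * ebas (BS (\<sigma> p)) x) \<in> Vsp k"
          using p sp by (intro Vsp_comb A_Vsp) (auto simp: ebas_Vsp)
        fix i assume i: "i \<le> k"
        show "A (ebas (BS p)) (BU i) - sgn (aa 0) * ebas (BS (\<sigma> p)) (BU i) = 0"
          using AS_U[OF p i] by simp
      next
        fix j assume j: "1 \<le> j" "j \<le> k"
        have "DD j p = DD j (tau (\<sigma> p))" using sp by simp
        also have "\<dots> = (if j = \<sigma> p then sgn (aa 0) else 0)"
          using D_tau[OF sp(2,3) j] scal(2)[OF sp(2,3)] by simp
        finally show "A (ebas (BS p)) (BS j) - sgn (aa 0) * ebas (BS (\<sigma> p)) (BS j) = 0"
          by (simp add: DD_def)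
      qed
    qed
  qed
  show ?thesis
    apply (rule exI[of _ \<sigma>], rule exI[of _ "aa 0"], rule exI[of _ b])
    using sb P2 P3 P4 by auto
qed

end

theorem theorem1p5:
  fixes k :: nat and eps :: "nat \<Rightarrow> real" and A :: "vec \<Rightarrow> vec"
  assumes "k \<ge> 2"
    and "\<forall>i\<in>{1..k}. eps i = 1 \<or> eps i = -1"
    and "model_iso k eps A"
  shows "\<exists>\<sigma> :: nat \<Rightarrow> nat. \<exists>a0 :: real. \<exists>b :: nat \<Rightarrow> real.
           bij_betw \<sigma> {1..k} {1..k}
         \<and> (\<forall>i\<in>{1..k}. \<bar>a0\<bar> * (b i)\<^sup>2 = 1)
         \<and> (\<exists>\<xi>\<in>AV k. A (ebas (BU 0)) = (\<lambda>x. a0 * ebas (BU 0) x + \<xi> x))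
         \<and> (\<forall>i\<in>{1..k}.
              (\<exists>\<xi>\<in>ASV k eps. A (ebas (BU i)) = (\<lambda>x. b i * ebas (BU (\<sigma> i)) x + \<xi> x))
            \<and> (\<exists>\<xi>\<in>AV k. A (ebas (BS i)) = (\<lambda>x. sgn a0 * ebas (BS (\<sigma> i)) x + \<xi> x)))"
  by (rule main[OF assms])

end
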